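(* The Max-Egal objective is weak-proof against a manipulator $m^+$ (one who can only add edges) over undirected networks. That is, for every $k$, every undirected social network $G$, every agent $m$ and every manipulation in which $m$ adds edges incident to $m$ (yielding $G^m$), it is not the case that both \[\min_{P\in O(G^m)} u(m,P)>\min_{P\in O(G)} u(m,P)\quad\text{and}\quad \max_{P\in O(G^m)} u(m,P)>\max_{P\in O(G)} u(m,P),\] where $O(\cdot)$ denotes the set of Max-Egal solutions and $u(m,P)$ is computed in the true network $G$.
   Context: Let $A=\{a_1,\dots,a_n\}$ be a finite nonempty set of agents and $G=\langle A,E\rangle$ an undirected graph without self-loops (the social network). $N(a)$ is the set of neighbours of $a$ in $G$. For a coalition $C\subseteq A$ with $a\in C$, $u(a,C)=|C\cap N(a)|$. For $0<k\le n$, $\Pi_k$ is the set of partitions of $A$ into exactly $k$ nonempty coalitions; for $P\in\Pi_k$, $u(a,P)=u(a,C)$ where $C\in P$ contains $a$. The Max-Egal objective: $O(G)$ is the set of $P\in\Pi_k$ maximizing $\min_{a\in A}u(a,P)$ (utilities computed in the network in question). A manipulator $m$ of type $m^+$ in an undirected network may add any set of new edges $\{m,a\}$ (non-edges of $G$); the resulting reported network is $G^m$. The utility $u(m,P)$ of the manipulator is always computed with respect to his true neighbours in the original $G$. *)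

theory Defs
  imports Main
begin

definition undirected_graph :: "'a set \<Rightarrow> 'a set set \<Rightarrow> bool" where
  "undirected_graph A E \<longleftrightarrow> (\<forall>e\<in>E. \<exists>x y. e = {x, y} \<and> x \<noteq> y \<and> x \<in> A \<and> y \<in> A)"

definition nbrs :: "'a set set \<Rightarrow> 'a \<Rightarrow> 'a set" where
  "nbrs E a = {b. {a, b} \<in> E \<and> b \<noteq> a}"

definition partitions_k :: "'a set \<Rightarrow> nat \<Rightarrow> 'a set set set" where
  "partitions_k A k = {P. (\<forall>C\<in>P. C \<noteq> {}) \<and> \<Union>P = A \<and>
      (\<forall>C\<in>P. \<forall>D\<in>P. C \<noteq> D \<longrightarrow> C \<inter> D = {}) \<and> finite P \<and> card P = k}"

definition coal :: "'a set set \<Rightarrow> 'a \<Rightarrow> 'a set" where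
  "coal P a = (THE C. C \<in> P \<and> a \<in> C)"

definition util :: "'a set set \<Rightarrow> 'a \<Rightarrow> 'a set set \<Rightarrow> nat" where
  "util E a P = card (coal P a \<inter> nbrs E a)"

definition egal_value :: "'a set \<Rightarrow> 'a set set \<Rightarrow> 'a set set \<Rightarrow> nat" where
  "egal_value A E P = Min ((\<lambda>a. util E a P) ` A)"

definition max_egal :: "'a set \<Rightarrow> 'a set set \<Rightarrow> nat \<Rightarrow> 'a set set set" where
  "max_egal A E k = {P \<in> partitions_k A k.
      \<forall>Q \<in> partitions_k A k. egal_value A E Q \<le> egal_value A E P}"

definition plus_manipulation :: "'a set \<Rightarrow> 'a set set \<Rightarrow> 'a \<Rightarrow> 'a set set \<Rightarrow> bool" where
  "plus_manipulation A E m E' \<longleftrightarrow>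
     (\<exists>F. F \<subseteq> {{m, a} | a. a \<in> A \<and> a \<noteq> m \<and> {m, a} \<notin> E} \<and> E' = E \<union> F)"

end

theory Submission
  imports Defs
begin

lemma nbrs_sub:
  assumes "undirected_graph A E" "m \<in> A" "plus_manipulation A E m E'"
  shows "nbrs E' a \<subseteq> A" "nbrs E a \<subseteq> nbrs E' a"
    "a \<noteq> m \<Longrightarrow> nbrs E' a \<subseteq> insert m (nbrs E a)"
proof -
  obtain F where F: "F \<subseteq> {{m, a} | a. a \<in> A \<and> a \<noteq> m \<and> {m, a} \<notin> E}" "E' = E \<union> F"
    using assms(3) unfolding plus_manipulation_def by blast
  show "nbrs E a \<subseteq> nbrs E' a" using F unfolding nbrs_def by auto
  show "nbrs E' a \<subseteq> A"
  proof
    fix b assume "b \<in> nbrs E' a"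
    hence b: "{a,b} \<in> E'" "b \<noteq> a" unfolding nbrs_def by auto
    show "b \<in> A"
    proof (cases "{a,b} \<in> E")
      case True
      then obtain x y where "{a,b} = {x,y}" "x \<in> A" "y \<in> A"
        using assms(1) unfolding undirected_graph_def by blast
      thus ?thesis by (metis doubleton_eq_iff)
    next
      case False
      then obtain c where "{a,b} = {m,c}" "c \<in> A" using b F by auto
      thus ?thesis using assms(2) by (metis doubleton_eq_iff)
    qed
  qed
  show "nbrs E' a \<subseteq> insert m (nbrs E a)" if "a \<noteq> m"
  proof
    fix b assume "b \<in> nbrs E' a"
    hence b: "{a,b} \<in> E'" "b \<noteq> a" unfolding nbrs_def by auto
    show "b \<in> insert m (nbrs E a)"
    proof (cases "{a,b} \<in> E")
      case True
      thus ?thesis using b unfolding nbrs_def by auto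
    next
      case False
      then obtain c where "{a,b} = {m,c}" using b F by auto
      hence "b = m" using that by (metis doubleton_eq_iff)
      thus ?thesis by simp
    qed
  qed
qed

lemma util_mono:
  assumes "undirected_graph A E" "m \<in> A" "plus_manipulation A E m E'" "finite A"
  shows "util E a P \<le> util E' a P"
proof -
  have "finite (nbrs E' a)" using nbrs_sub(1)[OF assms(1-3)] assms(4) finite_subset by blast
  thus ?thesis unfolding util_def using nbrs_sub(2)[OF assms(1-3)]
    by (intro card_mono) auto
qed

lemma util_bound:
  assumes "undirected_graph A E" "m \<in> A" "plus_manipulation A E m E'" "finite A" "a \<noteq> m"
  shows "util E' a P \<le> util E a P + 1"
proof -
  have "nbrs E a \<subseteq> A" using nbrs_sub(1,2)[OF assms(1-3), of a] by (rule order_trans[rotated])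
  hence fin: "finite (nbrs E a)" using assms(4) by (rule finite_subset)
  have sub: "coal P a \<inter> nbrs E' a \<subseteq> insert m (coal P a \<inter> nbrs E a)"
    using nbrs_sub(3)[OF assms(1-3) assms(5)] by blast
  have fin2: "finite (insert m (coal P a \<inter> nbrs E a))" using fin by blast
  have "util E' a P \<le> card (insert m (coal P a \<inter> nbrs E a))"
    unfolding util_def using card_mono[OF fin2 sub] .
  also have "\<dots> \<le> card (coal P a \<inter> nbrs E a) + 1"
    using fin by (simp add: card_insert_if)
  also have "\<dots> = util E a P + 1" unfolding util_def by simp
  finally show ?thesis .
qed

lemma egal_le: "finite A \<Longrightarrow> a \<in> A \<Longrightarrow> egal_value A E P \<le> util E a P"
  unfolding egal_value_def by simp

lemma egal_ge: "finite A \<Longrightarrow> A \<noteq> {} \<Longrightarrow> (\<And>a. a \<in> A \<Longrightarrow> x \<le> util E a P) \<Longrightarrow> x \<le> egal_value A E P"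
  unfolding egal_value_def by simp

lemma ex_opt:
  assumes "finite A" "partitions_k A k \<noteq> {}"
  shows "\<exists>P. P \<in> max_egal A E k"
proof -
  let ?S = "partitions_k A k"
  have "?S \<subseteq> Pow (Pow A)" unfolding partitions_k_def by auto
  hence fS: "finite ?S" using assms(1) finite_subset by blast
  let ?M = "Max ((\<lambda>P. egal_value A E P) ` ?S)"
  have "?M \<in> (\<lambda>P. egal_value A E P) ` ?S" using fS assms(2) by (intro Max_in) auto
  then obtain P where P: "P \<in> ?S" "egal_value A E P = ?M" by auto
  have "\<forall>Q\<in>?S. egal_value A E Q \<le> egal_value A E P" using P fS by auto
  thus ?thesis using P unfolding max_egal_def by auto
qed

lemma fin_opt: "finite A \<Longrightarrow> finite (max_egal A E k)"
proof -
  assume "finite A"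
  have "max_egal A E k \<subseteq> Pow (Pow A)" unfolding max_egal_def partitions_k_def by auto
  thus ?thesis using \<open>finite A\<close> finite_subset by blast
qed

theorem theorem1:
  fixes A :: "'a set" and E E' :: "'a set set" and m :: 'a and k :: nat
  assumes "finite A" and "A \<noteq> {}"
    and "undirected_graph A E"
    and "0 < k" and "k \<le> card A"
    and "m \<in> A"
    and "plus_manipulation A E m E'"
  shows "\<not> ((Min ((\<lambda>P. util E m P) ` max_egal A E' k) > Min ((\<lambda>P. util E m P) ` max_egal A E k))
          \<and> (Max ((\<lambda>P. util E m P) ` max_egal A E' k) > Max ((\<lambda>P. util E m P) ` max_egal A E k)))"
proof (cases "partitions_k A k = {}")
  case True
  hence "max_egal A E k = {}" "max_egal A E' k = {}" unfolding max_egal_def by auto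
  thus ?thesis by simp
next
  case False
  let ?O = "max_egal A E k" and ?O' = "max_egal A E' k"
  obtain P0 where P0: "P0 \<in> ?O" using ex_opt[OF assms(1) False] by blast
  obtain P1 where P1: "P1 \<in> ?O'" using ex_opt[OF assms(1) False] by blast
  define v where "v = egal_value A E P0"
  define v' where "v' = egal_value A E' P1"
  have fO: "finite ?O" "finite ?O'" using fin_opt assms(1) by auto
  have um: "\<And>a P. util E a P \<le> util E' a P" using util_mono[OF assms(3,6,7,1)] .
  have em: "egal_value A E P \<le> egal_value A E' P" for P
  proof (rule egal_ge[OF assms(1,2)])
    fix a assume a: "a \<in> A"
    have "egal_value A E P \<le> util E a P" using egal_le[OF assms(1) a] .
    also have "\<dots> \<le> util E' a P" by (rule um)
    finally show "egal_value A E P \<le> util E' a P" .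
  qed
  have optO: "\<And>Q. Q \<in> partitions_k A k \<Longrightarrow> egal_value A E Q \<le> v"
    using P0 unfolding v_def max_egal_def by auto
  have optO': "\<And>Q. Q \<in> partitions_k A k \<Longrightarrow> egal_value A E' Q \<le> v'"
    using P1 unfolding v'_def max_egal_def by auto
  have vO: "egal_value A E P = v" if P: "P \<in> ?O" for P
  proof -
    have "P \<in> partitions_k A k" "egal_value A E P0 \<le> egal_value A E P"
      using P P0 unfolding max_egal_def by auto
    thus ?thesis using optO unfolding v_def by (simp add: antisym)
  qed
  have vO': "egal_value A E' P = v'" if P: "P \<in> ?O'" for P
  proof -
    have "P \<in> partitions_k A k" "egal_value A E' P1 \<le> egal_value A E' P"
      using P P1 unfolding max_egal_def by auto
    thus ?thesis using optO' unfolding v'_def by (simp add: antisym)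
  qed
  show ?thesis
  proof (cases "v' \<le> v")
    case True
    have sub: "?O \<subseteq> ?O'"
    proof
      fix P assume P: "P \<in> ?O"
      have "\<forall>Q\<in>partitions_k A k. egal_value A E' Q \<le> egal_value A E' P"
      proof
        fix Q assume "Q \<in> partitions_k A k"
        hence "egal_value A E' Q \<le> v'" by (rule optO')
        also have "\<dots> \<le> v" by (rule True)
        also have "\<dots> = egal_value A E P" using vO[OF P] by simp
        also have "\<dots> \<le> egal_value A E' P" by (rule em)
        finally show "egal_value A E' Q \<le> egal_value A E' P" .
      qed
      thus "P \<in> ?O'" using P unfolding max_egal_def by auto
    qed
    have "Min ((\<lambda>P. util E m P) ` ?O') \<le> Min ((\<lambda>P. util E m P) ` ?O)"
      using sub P0 fO by (intro Min_antimono) auto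
    thus ?thesis by simp
  next
    case False
    have "\<forall>x \<in> (\<lambda>P. util E m P) ` ?O'. x \<le> Max ((\<lambda>P. util E m P) ` ?O)"
    proof
      fix x assume "x \<in> (\<lambda>P. util E m P) ` ?O'"
      then obtain P where P: "P \<in> ?O'" "x = util E m P" by auto
      have bnd: "util E m Q \<le> Max ((\<lambda>P. util E m P) ` ?O)" if "Q \<in> ?O" for Q
        using fO that by (intro Max_ge) auto
      show "x \<le> Max ((\<lambda>P. util E m P) ` ?O)"
      proof (cases "util E m P \<le> v")
        case True
        have "v \<le> util E m P0" using vO[OF P0] egal_le[OF assms(1,6)] by metis
        thus ?thesis using True P bnd[OF P0] by linarith
      next
        case c2: False
        have "\<forall>a\<in>A. v \<le> util E a P"
        proof
          fix a assume a: "a \<in> A"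
          show "v \<le> util E a P"
          proof (cases "a = m")
            case True thus ?thesis using c2 by simp
          next
            case ne: False
            have "v' \<le> util E' a P" using vO'[OF P(1)] egal_le[OF assms(1) a] by metis
            thus ?thesis using util_bound[OF assms(3,6,7,1) ne, of P] False by linarith
          qed
        qed
        hence "v \<le> egal_value A E P" using assms(1,2) by (intro egal_ge) auto
        hence "P \<in> ?O" using P(1) optO unfolding max_egal_def by (auto intro: le_trans)
        thus ?thesis using bnd P by simp
      qed
    qed
    hence "Max ((\<lambda>P. util E m P) ` ?O') \<le> Max ((\<lambda>P. util E m P) ` ?O)"
      using fO P1 by (subst Max_le_iff) auto
    thus ?thesis by simp
  qed
qed

end
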